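(* Let $(\mathcal{S},\mathcal{A})$ be a finite directed acyclic graph with a unique initial state $s_0$, a unique sink state $s_f$, and a set of terminating states $\mathcal{X}\subset\mathcal{S}$ (the states having an edge to $s_f$). Let $k\ge 1$ and for each $i\in\{1,\dots,k\}$ let $p_{i,F}$ be a forward policy on this graph whose induced terminating state distribution is $p_i(x)=R_i(x)/Z_i$ for $x\in\mathcal{X}$, where $R_i:\mathcal{X}\to[0,\infty)$ and $Z_i=\sum_{x\in\mathcal{X}}R_i(x)>0$. Let $u_i$ denote the reaching probability under $p_{i,F}$. Let $\omega_1,\dots,\omega_k\ge 0$ and let $\mathcal{G}(a_1,\dots,a_k)=\sum_{i=1}^k\omega_i Z_i a_i$. Define the mixing policy $$p_{M,F}(s'\mid s)=\frac{\mathcal{G}\bigl(u_1(s)p_{1,F}(s'\mid s),\dots,u_k(s)p_{k,F}(s'\mid s)\bigr)}{N_M(s)},\qquad N_M(s)=\sum_{s':(s\to s')\in\mathcal{A}}\mathcal{G}\bigl(u_1(s)p_{1,F}(s'\mid s),\dots,u_k(s)p_{k,F}(s'\mid s)\bigr).$$ Then the terminating state distribution $p_M$ induced by $p_{M,F}$ exactly equals the target distribution $p_M^*$, i.e. $p_M(x)=p_M^*(x)\propto\sum_{i=1}^k\omega_iR_i(x)$ for $x\in\mathcal{X}$.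
   Context: A forward policy $p_F$ assigns to each state $s\neq s_f$ a probability distribution $p_F(\cdot\mid s)$ over the children $s'$ of $s$ (states with $(s\to s')\in\mathcal{A}$). It induces a distribution over complete trajectories $s_0\to s_1\to\cdots\to s_n=x\to s_f$ by multiplying transition probabilities. The reaching probability is $u(s)=\sum_{\tau\in\mathcal{T}_{s_0,s}}\prod_{t=1}^T p_F(s_t\mid s_{t-1})$, where $\mathcal{T}_{s_0,s}$ is the set of paths $s_0\to\cdots\to s_T=s$; equivalently $u(s_0)=1$ and $u(s)=\sum_{s_*:(s_*\to s)\in\mathcal{A}}u(s_* )p_F(s\mid s_* )$. The induced terminating state distribution is $p(x)=u(x)\,p_F(s_f\mid x)$ for $x\in\mathcal{X}$. *)

theory Defs
  imports Complex_Main
begin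

definition paths :: "('a \<times> 'a) set \<Rightarrow> 'a \<Rightarrow> 'a \<Rightarrow> 'a list set" where
  "paths A a b = {xs. xs \<noteq> [] \<and> hd xs = a \<and> last xs = b \<and>
                      (\<forall>i < length xs - 1. (xs ! i, xs ! Suc i) \<in> A)}"

definition reach :: "('a \<times> 'a) set \<Rightarrow> ('a \<Rightarrow> 'a \<Rightarrow> real) \<Rightarrow> 'a \<Rightarrow> 'a \<Rightarrow> real" where
  "reach A pF s0 s = (\<Sum>xs \<in> paths A s0 s. \<Prod>i < length xs - 1. pF (xs ! i) (xs ! Suc i))"

definition term_states :: "('a \<times> 'a) set \<Rightarrow> 'a \<Rightarrow> 'a set" where
  "term_states A sf = {x. (x, sf) \<in> A}"

definition term_dist :: "('a \<times> 'a) set \<Rightarrow> 'a \<Rightarrow> 'a \<Rightarrow> ('a \<Rightarrow> 'a \<Rightarrow> real) \<Rightarrow> 'a \<Rightarrow> real" where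
  "term_dist A s0 sf pF x = reach A pF s0 x * pF x sf"

definition forward_policy :: "'a set \<Rightarrow> ('a \<times> 'a) set \<Rightarrow> 'a \<Rightarrow> ('a \<Rightarrow> 'a \<Rightarrow> real) \<Rightarrow> bool" where
  "forward_policy S A sf pF \<longleftrightarrow>
     (\<forall>s \<in> S. s \<noteq> sf \<longrightarrow>
        (\<forall>s'. (s, s') \<in> A \<longrightarrow> 0 \<le> pF s s') \<and> (\<Sum>s' \<in> {s'. (s, s') \<in> A}. pF s s') = 1)"

definition mixG :: "nat \<Rightarrow> (nat \<Rightarrow> real) \<Rightarrow> (nat \<Rightarrow> real) \<Rightarrow> (nat \<Rightarrow> real) \<Rightarrow> real" where
  "mixG k \<omega> Z a = (\<Sum>i = 1..k. \<omega> i * Z i * a i)"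

definition mix_policy :: "('a \<times> 'a) set \<Rightarrow> 'a \<Rightarrow> nat \<Rightarrow> (nat \<Rightarrow> real) \<Rightarrow> (nat \<Rightarrow> real)
     \<Rightarrow> (nat \<Rightarrow> 'a \<Rightarrow> 'a \<Rightarrow> real) \<Rightarrow> 'a \<Rightarrow> 'a \<Rightarrow> real" where
  "mix_policy A s0 k \<omega> Z pF s s' =
     mixG k \<omega> Z (\<lambda>i. reach A (pF i) s0 s * pF i s s') /
     (\<Sum>t \<in> {t. (s, t) \<in> A}. mixG k \<omega> Z (\<lambda>i. reach A (pF i) s0 s * pF i s t))"

end

theory Submission
  imports Defs
begin

lemma path_trancl:
  assumes "xs \<in> paths A a b" "i < j" "j < length xs"
  shows "(xs!i, xs!j) \<in> A\<^sup>+"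
  using assms(2,3)
proof (induction j)
  case 0 then show ?case by simp
next
  case (Suc j)
  have e: "(xs!j, xs!Suc j) \<in> A" using assms(1) Suc.prems unfolding paths_def by auto
  show ?case
  proof (cases "i = j")
    case True then show ?thesis using e by auto
  next
    case False
    then have "(xs!i, xs!j) \<in> A\<^sup>+" using Suc by auto
    then show ?thesis using e by (meson trancl.trancl_into_trancl)
  qed
qed

lemma path_distinct:
  assumes "acyclic A" "xs \<in> paths A a b"
  shows "distinct xs"
proof -
  have "xs!i \<noteq> xs!j" if "i < j" "j < length xs" for i j
    using path_trancl[OF assms(2) that] assms(1) unfolding acyclic_def by metis
  then show ?thesis unfolding distinct_conv_nth by (metis linorder_neqE_nat)
qed

lemma path_set:
  assumes "A \<subseteq> S \<times> S" "a \<in> S" "xs \<in> paths A a b"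
  shows "set xs \<subseteq> S"
proof
  fix x assume "x \<in> set xs"
  then obtain j where j: "j < length xs" "x = xs!j" by (auto simp: in_set_conv_nth)
  show "x \<in> S"
  proof (cases j)
    case 0 then show ?thesis using assms j by (auto simp: paths_def hd_conv_nth)
  next
    case (Suc m)
    then have "(xs!m, xs!Suc m) \<in> A" using assms(3) j unfolding paths_def by auto
    then show ?thesis using assms(1) j Suc by auto
  qed
qed

lemma finite_paths:
  assumes "finite S" "A \<subseteq> S \<times> S" "acyclic A" "a \<in> S"
  shows "finite (paths A a b)"
proof (rule finite_subset)
  show "paths A a b \<subseteq> {xs. set xs \<subseteq> S \<and> length xs \<le> card S}"
  proof
    fix xs assume xs: "xs \<in> paths A a b"
    have "set xs \<subseteq> S" using path_set[OF assms(2,4) xs] .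
    moreover have "distinct xs" using path_distinct[OF assms(3) xs] .
    ultimately have "length xs \<le> card S"
      by (metis assms(1) card_mono distinct_card)
    then show "xs \<in> {xs. set xs \<subseteq> S \<and> length xs \<le> card S}" using \<open>set xs \<subseteq> S\<close> by auto
  qed
  show "finite {xs. set xs \<subseteq> S \<and> length xs \<le> card S}"
    using finite_lists_length_le[OF assms(1)] by simp
qed

lemma paths_self:
  assumes "\<forall>s. (s, a) \<notin> A"
  shows "paths A a a = {[a]}"
proof -
  have "xs = [a]" if xs: "xs \<in> paths A a a" for xs
  proof (rule ccontr)
    assume ne: "xs \<noteq> [a]"
    have "xs \<noteq> []" "hd xs = a" "last xs = a" using xs by (auto simp: paths_def)
    then have "length xs \<ge> 2" using ne
    proof (cases xs)
      case (Cons y zs)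
      then show ?thesis using ne \<open>hd xs = a\<close> by (cases zs) auto
    qed simp
    then have "(xs ! (length xs - 2), xs ! Suc (length xs - 2)) \<in> A" using xs unfolding paths_def by auto
    moreover have "Suc (length xs - 2) = length xs - 1" using \<open>length xs \<ge> 2\<close> by simp
    moreover have "xs ! (length xs - 1) = a" using \<open>last xs = a\<close> \<open>xs \<noteq> []\<close> by (simp add: last_conv_nth)
    ultimately show False using assms by auto
  qed
  moreover have "[a] \<in> paths A a a" by (simp add: paths_def)
  ultimately show ?thesis by blast
qed

lemma reach_self:
  assumes "\<forall>s. (s, a) \<notin> A"
  shows "reach A p a a = 1"
  unfolding reach_def paths_self[OF assms] by simp

lemma paths_snoc:
  assumes "b \<noteq> a"
  shows "paths A a b = (\<Union>t\<in>{t. (t, b) \<in> A}. (\<lambda>ys. ys @ [b]) ` paths A a t)"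
proof (intro equalityI subsetI)
  fix xs assume xs: "xs \<in> paths A a b"
  have ne: "xs \<noteq> []" and h: "hd xs = a" and l: "last xs = b" using xs by (auto simp: paths_def)
  have len: "length xs \<ge> 2"
  proof (rule ccontr)
    assume "\<not> ?thesis"
    moreover have "length xs \<noteq> 0" using ne by simp
    ultimately have "length xs = 1" by linarith
    then show False using h l assms by (cases xs) auto
  qed
  define ys where "ys = butlast xs"
  have xs_eq: "xs = ys @ [b]" using ne l ys_def by (metis append_butlast_last_id)
  have lys: "length ys = length xs - 1" using ys_def by simp
  have ysne: "ys \<noteq> []" using len lys by auto
  have edge: "\<forall>i < length ys - 1. (ys ! i, ys ! Suc i) \<in> A"
    using xs unfolding paths_def by (auto simp: ys_def nth_butlast lys)
  have "hd ys = a" using h xs_eq ysne by simp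
  then have yp: "ys \<in> paths A a (last ys)" using ysne edge by (auto simp: paths_def)
  have "(xs ! (length xs - 2), xs ! Suc (length xs - 2)) \<in> A" using xs len unfolding paths_def by auto
  moreover have "xs ! (length xs - 2) = last ys" using xs_eq ysne lys len
    by (simp add: last_conv_nth nth_append)
  moreover have "Suc (length xs - 2) = length xs - 1" using len by simp
  then have "xs ! Suc (length xs - 2) = b" using ne l by (simp add: last_conv_nth)
  ultimately have "(last ys, b) \<in> A" by simp
  then show "xs \<in> (\<Union>t\<in>{t. (t, b) \<in> A}. (\<lambda>ys. ys @ [b]) ` paths A a t)"
    using yp xs_eq by blast
next
  fix xs assume "xs \<in> (\<Union>t\<in>{t. (t, b) \<in> A}. (\<lambda>ys. ys @ [b]) ` paths A a t)"
  then obtain t ys where t: "(t, b) \<in> A" and ys: "ys \<in> paths A a t" and xs: "xs = ys @ [b]" by auto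
  have ne: "ys \<noteq> []" "hd ys = a" "last ys = t" and e: "\<forall>i < length ys - 1. (ys ! i, ys ! Suc i) \<in> A"
    using ys by (auto simp: paths_def)
  have "(xs ! i, xs ! Suc i) \<in> A" if "i < length xs - 1" for i
  proof (cases "i < length ys - 1")
    case True
    then have "Suc i < length ys" by linarith
    then show ?thesis using e xs True by (simp add: nth_append)
  next
    case False
    then have "i = length ys - 1" using that xs by simp
    then show ?thesis using xs ne t by (simp add: nth_append last_conv_nth)
  qed
  then have "\<forall>i < length xs - 1. (xs ! i, xs ! Suc i) \<in> A" by blast
  moreover have "xs \<noteq> []" "hd xs = a" "last xs = b" using ne(1,2) xs by auto
  ultimately show "xs \<in> paths A a b" unfolding paths_def by blast
qed

lemma prod_snoc:
  assumes "ys \<noteq> []"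
  shows "(\<Prod>i < length (ys @ [b]) - 1. p ((ys @ [b]) ! i) ((ys @ [b]) ! Suc i))
       = (\<Prod>i < length ys - 1. p (ys ! i) (ys ! Suc i)) * p (last ys) b"
proof -
  obtain n where n: "length ys = Suc n" using assms by (cases ys) auto
  have "(\<Prod>i < length (ys @ [b]) - 1. p ((ys @ [b]) ! i) ((ys @ [b]) ! Suc i))
      = (\<Prod>i < Suc n. p ((ys @ [b]) ! i) ((ys @ [b]) ! Suc i))" using n by simp
  also have "\<dots> = (\<Prod>i < n. p ((ys @ [b]) ! i) ((ys @ [b]) ! Suc i)) * p ((ys @ [b]) ! n) ((ys @ [b]) ! Suc n)"
    by simp
  also have "(\<Prod>i < n. p ((ys @ [b]) ! i) ((ys @ [b]) ! Suc i)) = (\<Prod>i < n. p (ys ! i) (ys ! Suc i))"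
    by (rule prod.cong) (auto simp: nth_append n)
  also have "p ((ys @ [b]) ! n) ((ys @ [b]) ! Suc n) = p (last ys) b"
    using n assms by (simp add: nth_append last_conv_nth)
  finally show ?thesis using n by simp
qed

lemma reach_rec:
  assumes "b \<noteq> a" and fin: "\<And>t. finite (paths A a t)" and finP: "finite {t. (t, b) \<in> A}"
  shows "reach A p a b = (\<Sum>t\<in>{t. (t, b) \<in> A}. reach A p a t * p t b)"
proof -
  let ?f = "\<lambda>xs. \<Prod>i < length xs - 1. p (xs ! i) (xs ! Suc i)"
  have "reach A p a b = sum ?f (\<Union>t\<in>{t. (t, b) \<in> A}. (\<lambda>ys. ys @ [b]) ` paths A a t)"
    unfolding reach_def paths_snoc[OF assms(1)] ..
  also have "\<dots> = (\<Sum>t\<in>{t. (t, b) \<in> A}. sum ?f ((\<lambda>ys. ys @ [b]) ` paths A a t))"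
  proof (rule sum.UNION_disjoint)
    show "finite {t. (t, b) \<in> A}" by (rule finP)
    show "\<forall>t\<in>{t. (t, b) \<in> A}. finite ((\<lambda>ys. ys @ [b]) ` paths A a t)" using fin by auto
    show "\<forall>t\<in>{t. (t, b) \<in> A}. \<forall>t'\<in>{t. (t, b) \<in> A}. t \<noteq> t' \<longrightarrow>
          (\<lambda>ys. ys @ [b]) ` paths A a t \<inter> (\<lambda>ys. ys @ [b]) ` paths A a t' = {}"
      by (auto simp: paths_def)
  qed
  also have "\<dots> = (\<Sum>t\<in>{t. (t, b) \<in> A}. reach A p a t * p t b)"
  proof (rule sum.cong[OF refl])
    fix t assume "t \<in> {t. (t, b) \<in> A}"
    have "sum ?f ((\<lambda>ys. ys @ [b]) ` paths A a t) = sum (?f \<circ> (\<lambda>ys. ys @ [b])) (paths A a t)"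
      by (rule sum.reindex) (auto simp: inj_on_def)
    also have "\<dots> = (\<Sum>ys\<in>paths A a t. ?f ys * p t b)"
    proof (rule sum.cong[OF refl])
      fix ys assume ys: "ys \<in> paths A a t"
      then have ne: "ys \<noteq> []" and lt: "last ys = t" by (auto simp: paths_def)
      show "(?f \<circ> (\<lambda>ys. ys @ [b])) ys = ?f ys * p t b"
        unfolding o_def prod_snoc[OF ne] lt ..
    qed
    also have "\<dots> = reach A p a t * p t b" unfolding reach_def by (simp add: sum_distrib_right)
    finally show "sum ?f ((\<lambda>ys. ys @ [b]) ` paths A a t) = reach A p a t * p t b" .
  qed
  finally show ?thesis .
qed

lemma reach_nonneg:
  assumes "\<And>xs i. xs \<in> paths A a b \<Longrightarrow> i < length xs - 1 \<Longrightarrow> 0 \<le> p (xs!i) (xs!Suc i)"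
  shows "0 \<le> reach A p a b"
  unfolding reach_def using assms by (intro sum_nonneg prod_nonneg) auto


theorem proposition4p1:
  fixes S :: "'a set" and A :: "('a \<times> 'a) set" and s0 sf :: 'a
    and k :: nat and pF :: "nat \<Rightarrow> 'a \<Rightarrow> 'a \<Rightarrow> real" and R :: "nat \<Rightarrow> 'a \<Rightarrow> real"
    and \<omega> :: "nat \<Rightarrow> real"
  assumes finS: "finite S"
    and AS: "A \<subseteq> S \<times> S"
    and acyc: "acyclic A"
    and s0S: "s0 \<in> S" and sfS: "sf \<in> S"
    and s0_init: "\<forall>s. (s, s0) \<notin> A"
    and s0_unique: "\<forall>s \<in> S. s \<noteq> s0 \<longrightarrow> (\<exists>t. (t, s) \<in> A)"
    and sf_sink: "\<forall>s. (sf, s) \<notin> A"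
    and sf_unique: "\<forall>s \<in> S. s \<noteq> sf \<longrightarrow> (\<exists>t. (s, t) \<in> A)"
    and k: "k \<ge> 1"
    and pol: "\<forall>i \<in> {1..k}. forward_policy S A sf (pF i)"
    and Rnn: "\<forall>i \<in> {1..k}. \<forall>x \<in> term_states A sf. 0 \<le> R i x"
    and Zpos: "\<forall>i \<in> {1..k}. (\<Sum>x \<in> term_states A sf. R i x) > 0"
    and match: "\<forall>i \<in> {1..k}. \<forall>x \<in> term_states A sf.
                  term_dist A s0 sf (pF i) x = R i x / (\<Sum>y \<in> term_states A sf. R i y)"
    and \<omega>nn: "\<forall>i \<in> {1..k}. 0 \<le> \<omega> i"
  shows "\<forall>x \<in> term_states A sf.
           term_dist A s0 sf
             (mix_policy A s0 k \<omega> (\<lambda>i. \<Sum>y \<in> term_states A sf. R i y) pF) x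
         = (\<Sum>i = 1..k. \<omega> i * R i x) / (\<Sum>y \<in> term_states A sf. \<Sum>i = 1..k. \<omega> i * R i y)"
proof -
  define T where "T = term_states A sf"
  define Z where "Z = (\<lambda>i. \<Sum>y \<in> term_states A sf. R i y)"
  define pM where "pM = mix_policy A s0 k \<omega> Z pF"
  define u where "u = (\<lambda>i s. reach A (pF i) s0 s)"
  define w where "w = (\<lambda>s. \<Sum>i = 1..k. \<omega> i * Z i * u i s)"
  define C where "C = (\<Sum>i = 1..k. \<omega> i * Z i)"
  have finA: "finite A" by (rule finite_subset[OF AS]) (simp add: finS)
  have wfA: "wf A" using finA acyc by (rule finite_acyclic_wf)
  have fin: "\<And>t. finite (paths A s0 t)" using finite_paths[OF finS AS acyc s0S] .
  have finP: "finite {t. (t, b) \<in> A}" for b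
  proof (rule finite_subset[OF _ finS])
    show "{t. (t, b) \<in> A} \<subseteq> S" using AS by blast
  qed
  have finC: "finite {t. (s, t) \<in> A}" for s
  proof (rule finite_subset[OF _ finS])
    show "{t. (s, t) \<in> A} \<subseteq> S" using AS by blast
  qed
  have Zpos': "Z i > 0" if "i \<in> {1..k}" for i using Zpos that unfolding Z_def by blast
  have pnn: "\<And>i s t. i \<in> {1..k} \<Longrightarrow> (s, t) \<in> A \<Longrightarrow> 0 \<le> pF i s t"
  proof -
    fix i s t assume i: "i \<in> {1..k}" and e: "(s, t) \<in> A"
    have "s \<in> S" "s \<noteq> sf" using e AS sf_sink by auto
    then show "0 \<le> pF i s t" using pol i e unfolding forward_policy_def by blast
  qed
  have psum: "\<And>i s. i \<in> {1..k} \<Longrightarrow> s \<in> S \<Longrightarrow> s \<noteq> sf \<Longrightarrow> (\<Sum>t \<in> {t. (s, t) \<in> A}. pF i s t) = 1"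
    using pol unfolding forward_policy_def by blast
  have unn: "\<And>i s. i \<in> {1..k} \<Longrightarrow> 0 \<le> u i s"
    unfolding u_def by (rule reach_nonneg) (auto simp: paths_def intro: pnn)
  have key: "w s * pM s t = (\<Sum>i = 1..k. \<omega> i * Z i * (u i s * pF i s t))" if e: "(s, t) \<in> A" for s t
  proof -
    let ?g = "\<lambda>t. mixG k \<omega> Z (\<lambda>i. reach A (pF i) s0 s * pF i s t)"
    have sS: "s \<in> S" "s \<noteq> sf" using e AS sf_sink by auto
    have gnn: "0 \<le> ?g t'" if "(s, t') \<in> A" for t'
      unfolding mixG_def using that \<omega>nn Zpos' unn[unfolded u_def] pnn
      by (intro sum_nonneg) (simp add: less_imp_le)
    have N: "(\<Sum>t' \<in> {t. (s, t) \<in> A}. ?g t') = w s"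
    proof -
      have "(\<Sum>t' \<in> {t. (s, t) \<in> A}. ?g t')
          = (\<Sum>i = 1..k. \<Sum>t' \<in> {t. (s, t) \<in> A}. \<omega> i * Z i * u i s * pF i s t')"
        unfolding mixG_def u_def by (subst sum.swap) (simp add: mult.assoc)
      also have "\<dots> = (\<Sum>i = 1..k. \<omega> i * Z i * u i s * (\<Sum>t' \<in> {t. (s, t) \<in> A}. pF i s t'))"
        by (simp add: sum_distrib_left)
      also have "\<dots> = w s" unfolding w_def using psum sS by simp
      finally show ?thesis .
    qed
    have pM_eq: "pM s t = ?g t / w s" unfolding pM_def mix_policy_def N ..
    show ?thesis
    proof (cases "w s = 0")
      case True
      have "?g t \<le> (\<Sum>t' \<in> {t. (s, t) \<in> A}. ?g t')"
        by (rule member_le_sum) (use e gnn finC in auto)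
      then have "?g t = 0" using True N gnn[OF e] by simp
      then show ?thesis using True unfolding mixG_def u_def by simp
    next
      case False
      then show ?thesis unfolding pM_eq mixG_def u_def by simp
    qed
  qed
  have main: "C * reach A pM s0 s = w s" for s
  proof (induction s rule: wf_induct[OF wfA])
    case (1 s)
    show ?case
    proof (cases "s = s0")
      case True
      then show ?thesis unfolding w_def C_def u_def using reach_self[OF s0_init] by simp
    next
      case False
      have "C * reach A pM s0 s = (\<Sum>t\<in>{t. (t, s) \<in> A}. C * reach A pM s0 t * pM t s)"
        unfolding reach_rec[OF False fin finP] by (simp add: sum_distrib_left mult.assoc)
      also have "\<dots> = (\<Sum>t\<in>{t. (t, s) \<in> A}. w t * pM t s)"
        using 1 by (intro sum.cong) auto
      also have "\<dots> = (\<Sum>t\<in>{t. (t, s) \<in> A}. \<Sum>i = 1..k. \<omega> i * Z i * (u i t * pF i t s))"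
        using key by (intro sum.cong) auto
      also have "\<dots> = (\<Sum>i = 1..k. \<omega> i * Z i * (\<Sum>t\<in>{t. (t, s) \<in> A}. u i t * pF i t s))"
        by (subst sum.swap) (simp add: sum_distrib_left)
      also have "\<dots> = w s"
        unfolding w_def u_def reach_rec[OF False fin finP] ..
      finally show ?thesis .
    qed
  qed
  have wZnn: "0 \<le> \<omega> i * Z i" if "i \<in> {1..k}" for i
    using \<omega>nn Zpos'[OF that] that by (intro mult_nonneg_nonneg) auto
  have D: "(\<Sum>y \<in> term_states A sf. \<Sum>i = 1..k. \<omega> i * R i y) = C"
    unfolding C_def Z_def by (subst sum.swap) (simp add: sum_distrib_left)
  have final: "\<forall>x \<in> term_states A sf. term_dist A s0 sf pM x = (\<Sum>i = 1..k. \<omega> i * R i x) / (\<Sum>y \<in> term_states A sf. \<Sum>i = 1..k. \<omega> i * R i y)"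
  proof
    fix x assume x: "x \<in> term_states A sf"
    then have e: "(x, sf) \<in> A" by (simp add: term_states_def)
    have num: "C * term_dist A s0 sf pM x = (\<Sum>i = 1..k. \<omega> i * R i x)"
    proof -
      have "C * term_dist A s0 sf pM x = w x * pM x sf"
        unfolding term_dist_def main[symmetric] by simp
      also have "\<dots> = (\<Sum>i = 1..k. \<omega> i * Z i * (u i x * pF i x sf))" by (rule key[OF e])
      also have "\<dots> = (\<Sum>i = 1..k. \<omega> i * R i x)"
      proof (rule sum.cong[OF refl])
        fix i assume i: "i \<in> {1..k}"
        have "u i x * pF i x sf = R i x / Z i"
          using match i x unfolding u_def Z_def term_dist_def by auto
        then show "\<omega> i * Z i * (u i x * pF i x sf) = \<omega> i * R i x"
          using Zpos'[OF i] by simp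
      qed
      finally show ?thesis .
    qed
    show "term_dist A s0 sf pM x = (\<Sum>i = 1..k. \<omega> i * R i x) / (\<Sum>y \<in> term_states A sf. \<Sum>i = 1..k. \<omega> i * R i y)"
    proof (cases "C = 0")
      case False
      then show ?thesis unfolding D num[symmetric] by simp
    next
      case True
      have "\<forall>i \<in> {1..k}. \<omega> i * Z i = 0"
        using True unfolding C_def
        by (subst sum_nonneg_eq_0_iff[symmetric]) (auto intro: wZnn)
      then have om: "\<forall>i \<in> {1..k}. \<omega> i = 0"
        using Zpos' by (metis less_irrefl mult_eq_0_iff)
      have "pM x sf = 0" unfolding pM_def mix_policy_def mixG_def using om by simp
      then show ?thesis unfolding D True term_dist_def by simp
    qed
  qed
  then show ?thesis unfolding pM_def Z_def .
qed

end
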